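(* For every positive integer $l$ and every $n\ge 1$, the polynomial $\mathcal{A}_n^{(l)}(s,t)$ is symmetric in $s$ and $t$; equivalently, $\mathcal{A}^{(l)}(n,k)=\mathcal{A}^{(l)}(n,n-1-k)$ for $0\le k\le n-1$, i.e. the polynomial $\mathcal{A}_n^{(l)}(t)=\sum_{k=0}^{n-1}\mathcal{A}^{(l)}(n,k)t^k$ is palindromic.
   Context: A subexceedant function on $[n]$ is a map $f:[n]\to[n]$ with $1\le f(i)\le i$; its block leader set is $\mathrm{bl}(f)=\{i\in[n]: f(i)\notin f(\{1,\dots,i-1\})\}$. $\mathcal{A}^{(l)}(n,k)$ is the number of $l$-tuples $(f_1,\dots,f_l)$ of subexceedant functions on $[n]$ with $|\mathrm{bl}(f_1)|=k+1$ and $\mathrm{bl}(f_1)=\cdots=\mathrm{bl}(f_l)$. $\mathcal{A}_n^{(l)}(s,t)=\sum_{k=0}^{n-1}\mathcal{A}^{(l)}(n,k)s^kt^{n-1-k}$. *)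

theory Defs
  imports Main "HOL-Library.FuncSet"
begin

definition subexc :: "nat \<Rightarrow> (nat \<Rightarrow> nat) set" where
  "subexc n = {f \<in> {1..n} \<rightarrow>\<^sub>E {1..n}. \<forall>i\<in>{1..n}. 1 \<le> f i \<and> f i \<le> i}"

definition bl :: "nat \<Rightarrow> (nat \<Rightarrow> nat) \<Rightarrow> nat set" where
  "bl n f = {i \<in> {1..n}. f i \<notin> f ` {1..<i}}"

definition A :: "nat \<Rightarrow> nat \<Rightarrow> nat \<Rightarrow> nat" where
  "A l n k = card {fs. length fs = l \<and> set fs \<subseteq> subexc n \<and>
      card (bl n (fs ! 0)) = k + 1 \<and> (\<forall>j<l. bl n (fs ! j) = bl n (fs ! 0))}"

definition Apoly :: "nat \<Rightarrow> nat \<Rightarrow> 'a::comm_semiring_1 \<Rightarrow> 'a \<Rightarrow> 'a" where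
  "Apoly l n s t = (\<Sum>k=0..n-1. of_nat (A l n k) * s ^ k * t ^ (n - 1 - k))"

end

theory Submission
  imports Defs
begin

definition FS :: "nat \<Rightarrow> nat set \<Rightarrow> (nat \<Rightarrow> nat) set" where
  "FS n S = {f \<in> subexc n. bl n f = S}"

definition phi :: "nat \<Rightarrow> nat set \<Rightarrow> nat set" where
  "phi n S = insert 1 ({2..n} - S)"

definition TT :: "nat \<Rightarrow> nat \<Rightarrow> nat set set" where
  "TT n k = {S. S \<subseteq> {1..n} \<and> 1 \<in> S \<and> card S = k + 1}"

lemma finite_subexc: "finite (subexc n)"
  unfolding subexc_def
  by (rule finite_subset[of _ "{1..n} \<rightarrow>\<^sub>E {1..n}"]) (auto intro: finite_PiE)

lemma finite_FS: "finite (FS n S)"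
  unfolding FS_def using finite_subexc by auto

lemma bl_sub: "bl n f \<subseteq> {1..n}" by (auto simp: bl_def)

lemma one_bl: "n \<ge> 1 \<Longrightarrow> 1 \<in> bl n f" by (simp add: bl_def)

lemma img_bl: "f ` {1..n} = f ` bl n f"
proof
  show "f ` bl n f \<subseteq> f ` {1..n}" using bl_sub by auto
  show "f ` {1..n} \<subseteq> f ` bl n f"
  proof
    fix y assume "y \<in> f ` {1..n}"
    then obtain i where i: "i \<in> {1..n}" "y = f i" by auto
    define J where "J = {j \<in> {1..i}. f j = f i}"
    have fJ: "finite J" and iJ: "i \<in> J" using i by (auto simp: J_def)
    define j where "j = Min J"
    have jJ: "j \<in> J" using fJ iJ j_def Min_in by blast
    have jmin: "\<And>j'. j' \<in> J \<Longrightarrow> j \<le> j'" using fJ j_def by simp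
    have "f j \<notin> f ` {1..<j}"
    proof
      assume "f j \<in> f ` {1..<j}"
      then obtain j' where j': "j' \<in> {1..<j}" "f j' = f j" by auto
      then have "j' \<in> J" using jJ by (auto simp: J_def)
      with jmin j' show False by fastforce
    qed
    then have "j \<in> bl n f" using jJ i by (auto simp: J_def bl_def)
    moreover have "f j = y" using jJ i by (simp add: J_def)
    ultimately show "y \<in> f ` bl n f" by blast
  qed
qed

lemma inj_bl: "inj_on f (bl n f)"
proof (rule inj_onI)
  fix i j assume ij: "i \<in> bl n f" "j \<in> bl n f" "f i = f j"
  show "i = j"
  proof (rule ccontr)
    assume "i \<noteq> j"
    then consider "i < j" | "j < i" by linarith
    then show False
    proof cases
      case 1
      then have "i \<in> {1..<j}" using ij by (auto simp: bl_def)
      then have "f i \<in> f ` {1..<j}" by blast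
      with ij show False by (simp add: bl_def)
    next
      case 2
      then have "j \<in> {1..<i}" using ij by (auto simp: bl_def)
      then have "f j \<in> f ` {1..<i}" by blast
      with ij show False by (simp add: bl_def)
    qed
  qed
qed

lemma card_img: "card (f ` {1..n}) = card (bl n f)"
  using img_bl inj_bl card_image by metis

lemma ext_in: "g \<in> subexc n \<Longrightarrow> v \<in> {1..Suc n} \<Longrightarrow> g(Suc n := v) \<in> subexc (Suc n)"
  unfolding subexc_def
  apply (auto simp: PiE_def extensional_def Pi_iff)
  by (metis atLeastAtMost_iff le_Suc_eq le_SucI)

lemma restr_in: "f \<in> subexc (Suc n) \<Longrightarrow> f(Suc n := undefined) \<in> subexc n"
  unfolding subexc_def
  apply (auto simp: PiE_def extensional_def Pi_iff)
  by (metis atLeastAtMost_iff le_SucI order_trans)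

lemma last_in: "f \<in> subexc (Suc n) \<Longrightarrow> f (Suc n) \<in> {1..Suc n}"
  unfolding subexc_def by auto

lemma arb_Suc: "g \<in> subexc n \<Longrightarrow> g (Suc n) = undefined"
  unfolding subexc_def by (auto simp: PiE_def extensional_def)

lemma bl_ext: "bl (Suc n) (g(Suc n := v)) = bl n g \<union> (if v \<notin> g ` {1..n} then {Suc n} else {})"
proof -
  have e1: "\<And>i. i \<le> n \<Longrightarrow> (g(Suc n := v)) ` {1..<i} = g ` {1..<i}"
    by (auto simp: fun_upd_image)
  have e2: "(g(Suc n := v)) ` {1..<Suc n} = g ` {1..n}"
    by (auto simp: fun_upd_image atLeastLessThanSuc_atLeastAtMost)
  show ?thesis
    unfolding bl_def using e1 e2
    by (auto simp: le_Suc_eq)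
qed


lemma c_Suc:
  assumes S: "S \<subseteq> {1..Suc n}"
  shows "card (FS (Suc n) S) = card (FS n (S - {Suc n})) *
     (if Suc n \<in> S then Suc n - card (S - {Suc n}) else card (S - {Suc n}))"
proof -
  define S0 where "S0 = S - {Suc n}"
  define V where "V g = {v \<in> {1..Suc n}. (Suc n \<in> S \<longleftrightarrow> v \<notin> g ` {1..n})}" for g :: "nat \<Rightarrow> nat"
  define h where "h = (\<lambda>(g::nat\<Rightarrow>nat, v::nat). g(Suc n := v))"
  have S0sub: "S0 \<subseteq> {1..n}" using S by (auto simp: S0_def le_Suc_eq)
  have eq: "FS (Suc n) S = h ` (SIGMA g:FS n S0. V g)"
  proof
    show "FS (Suc n) S \<subseteq> h ` (SIGMA g:FS n S0. V g)"
    proof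
      fix f assume f: "f \<in> FS (Suc n) S"
      define g where "g = f(Suc n := undefined)"
      have fs: "f \<in> subexc (Suc n)" and fb: "bl (Suc n) f = S" using f by (auto simp: FS_def)
      have gs: "g \<in> subexc n" using restr_in[OF fs] g_def by simp
      have fg: "f = g(Suc n := f (Suc n))" using g_def by simp
      have blf: "bl (Suc n) f = bl n g \<union> (if f (Suc n) \<notin> g ` {1..n} then {Suc n} else {})"
        using bl_ext[of n g "f (Suc n)"] fg by simp
      have "Suc n \<notin> bl n g" using bl_sub[of n g] by auto
      then have bg: "bl n g = S0" using blf fb by (auto simp: S0_def split: if_splits)
      have "Suc n \<in> S \<longleftrightarrow> f (Suc n) \<notin> g ` {1..n}"
        using blf fb \<open>Suc n \<notin> bl n g\<close> by (auto split: if_splits)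
      then have "f (Suc n) \<in> V g" using last_in[OF fs] by (simp add: V_def)
      moreover have "g \<in> FS n S0" using gs bg by (simp add: FS_def)
      ultimately have "(g, f (Suc n)) \<in> (SIGMA g:FS n S0. V g)" by simp
      moreover have "h (g, f (Suc n)) = f" using fg by (simp add: h_def)
      ultimately show "f \<in> h ` (SIGMA g:FS n S0. V g)" by (metis image_eqI)
    qed
    show "h ` (SIGMA g:FS n S0. V g) \<subseteq> FS (Suc n) S"
    proof
      fix f assume "f \<in> h ` (SIGMA g:FS n S0. V g)"
      then obtain g v where g: "g \<in> FS n S0" and v: "v \<in> V g" and f: "f = g(Suc n := v)"
        by (auto simp: h_def)
      have gs: "g \<in> subexc n" and bg: "bl n g = S0" using g by (auto simp: FS_def)
      have v1: "v \<in> {1..Suc n}" and v2: "Suc n \<in> S \<longleftrightarrow> v \<notin> g ` {1..n}" using v by (auto simp: V_def)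
      have "f \<in> subexc (Suc n)" using ext_in[OF gs v1] f by simp
      moreover have "bl (Suc n) f = S"
        using bl_ext[of n g v] f bg v2 by (auto simp: S0_def split: if_splits)
      ultimately show "f \<in> FS (Suc n) S" by (simp add: FS_def)
    qed
  qed
  have inj: "inj_on h (SIGMA g:FS n S0. V g)"
  proof (rule inj_onI)
    fix x y assume x: "x \<in> (SIGMA g:FS n S0. V g)" and y: "y \<in> (SIGMA g:FS n S0. V g)" and hxy: "h x = h y"
    obtain g v where xe: "x = (g, v)" by (cases x)
    obtain g' v' where ye: "y = (g', v')" by (cases y)
    have "g \<in> subexc n" "g' \<in> subexc n" using x y xe ye by (auto simp: FS_def)
    then have a: "g (Suc n) = undefined" "g' (Suc n) = undefined" using arb_Suc by auto
    have e: "g(Suc n := v) = g'(Suc n := v')" using hxy xe ye by (simp add: h_def)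
    then have "v = v'" by (metis fun_upd_same)
    moreover have "g = g'"
    proof
      fix i show "g i = g' i"
        using a e by (cases "i = Suc n") (auto dest: fun_cong[where x=i])
    qed
    ultimately show "x = y" using xe ye by simp
  qed
  have cV: "card (V g) = (if Suc n \<in> S then Suc n - card S0 else card S0)" if g: "g \<in> FS n S0" for g
  proof -
    have gs: "g \<in> subexc n" and bg: "bl n g = S0" using g by (auto simp: FS_def)
    have ci: "card (g ` {1..n}) = card S0" using card_img[of g n] bg by simp
    have isub: "g ` {1..n} \<subseteq> {1..Suc n}" using gs unfolding subexc_def by auto
    show ?thesis
    proof (cases "Suc n \<in> S")
      case True
      then have "V g = {1..Suc n} - g ` {1..n}" by (auto simp: V_def)
      then show ?thesis using True ci isub by (simp add: card_Diff_subset)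
    next
      case False
      then have "V g = g ` {1..n}" using isub by (auto simp: V_def)
      then show ?thesis using False ci by simp
    qed
  qed
  have "card (FS (Suc n) S) = card (SIGMA g:FS n S0. V g)"
    using eq inj card_image by metis
  also have "\<dots> = (\<Sum>g\<in>FS n S0. card (V g))"
    using finite_FS by (simp add: V_def)
  also have "\<dots> = (\<Sum>g\<in>FS n S0. (if Suc n \<in> S then Suc n - card S0 else card S0))"
    using cV by simp
  also have "\<dots> = card (FS n S0) * (if Suc n \<in> S then Suc n - card S0 else card S0)"
    by simp
  finally show ?thesis by (simp add: S0_def)
qed


lemma card_phi:
  assumes S: "S \<subseteq> {1..n}" and one: "1 \<in> S"
  shows "card (phi n S) = Suc n - card S"
proof -
  have e: "{2..n} - S = {2..n} - (S - {1})" by auto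
  have sub: "S - {1} \<subseteq> {2..n}" using S by (auto simp: subset_iff)
  have cS: "card S \<le> n" using card_mono[OF _ S] by simp
  have cS1: "card S \<ge> 1" using one S finite_subset[OF S] by (auto simp: card_gt_0_iff Suc_le_eq)
  have c1: "card (S - {1}) = card S - 1" using one by simp
  have "card ({2..n} - (S - {1})) = card {2..n} - card (S - {1})"
    by (rule card_Diff_subset[OF finite_subset[OF sub] sub]) simp
  then have "card ({2..n} - S) = (n - 1) - (card S - 1)"
    using e c1 by simp
  moreover have "1 \<notin> {2..n} - S" by simp
  ultimately have "card (phi n S) = Suc ((n - 1) - (card S - 1))"
    unfolding phi_def by simp
  then show ?thesis using cS cS1 by simp
qed

lemma phi_sub: "n \<ge> 1 \<Longrightarrow> phi n S \<subseteq> {1..n}" by (auto simp: phi_def)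

lemma phi_one: "1 \<in> phi n S" by (simp add: phi_def)

lemma phi_phi: "S \<subseteq> {1..n} \<Longrightarrow> 1 \<in> S \<Longrightarrow> phi n (phi n S) = S"
  unfolding phi_def by (auto simp: subset_iff)

lemma c_phi:
  assumes "n \<ge> 1"
  shows "S \<subseteq> {1..n} \<Longrightarrow> 1 \<in> S \<Longrightarrow> card (FS n S) = card (FS n (phi n S))"
  using assms
proof (induction n arbitrary: S rule: nat_induct_at_least)
  case base
  then have "S = {1}" by auto
  moreover have "phi 1 {1} = {1}" by (simp add: phi_def)
  ultimately show ?case by simp
next
  case (Suc n)
  define S0 where "S0 = S - {Suc n}"
  define P where "P = phi (Suc n) S"
  have S0s: "S0 \<subseteq> {1..n}" using Suc.prems by (auto simp: S0_def le_Suc_eq)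
  have S01: "1 \<in> S0" using Suc.prems Suc.hyps by (auto simp: S0_def)
  have Ps: "P \<subseteq> {1..Suc n}" using phi_sub[of "Suc n" S] by (simp add: P_def)
  have P0: "P - {Suc n} = phi n S0" using Suc.hyps by (auto simp: P_def S0_def phi_def)
  have PS: "Suc n \<in> P \<longleftrightarrow> Suc n \<notin> S" using Suc.hyps by (auto simp: P_def phi_def)
  have cp: "card (phi n S0) = Suc n - card S0" using card_phi[OF S0s S01] .
  have cS0: "card S0 \<le> n" using card_mono[OF _ S0s] by simp
  have IH: "card (FS n S0) = card (FS n (phi n S0))" using Suc.IH[OF S0s S01] .
  have "card (FS (Suc n) S) = card (FS n S0) * (if Suc n \<in> S then Suc n - card S0 else card S0)"
    using c_Suc[OF Suc.prems(1)] by (simp add: S0_def)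
  moreover have "card (FS (Suc n) P) = card (FS n (phi n S0)) *
      (if Suc n \<in> P then Suc n - card (phi n S0) else card (phi n S0))"
    using c_Suc[OF Ps] P0 by simp
  ultimately show ?case using IH cp cS0 PS by (simp add: P_def)
qed

lemma A_sum:
  assumes l: "l \<ge> 1" and n: "n \<ge> 1"
  shows "A l n k = (\<Sum>S\<in>TT n k. card (FS n S) ^ l)"
proof -
  define L where "L = {fs. length fs = l \<and> set fs \<subseteq> subexc n \<and>
      card (bl n (fs ! 0)) = k + 1 \<and> (\<forall>j<l. bl n (fs ! j) = bl n (fs ! 0))}"
  define B where "B S = {fs. set fs \<subseteq> FS n S \<and> length fs = l}" for S
  have LB: "L = (\<Union>S\<in>TT n k. B S)"
  proof
    show "L \<subseteq> (\<Union>S\<in>TT n k. B S)"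
    proof
      fix fs assume fs: "fs \<in> L"
      define S where "S = bl n (fs ! 0)"
      have len: "length fs = l" and ss: "set fs \<subseteq> subexc n"
        and cd: "card S = k + 1" and allb: "\<forall>j<l. bl n (fs ! j) = S"
        using fs unfolding L_def S_def mem_Collect_eq by blast+
      have "fs ! 0 \<in> set fs" using len l by (simp add: nth_mem)
      then have "S \<in> TT n k" using bl_sub[of n "fs ! 0"] one_bl[OF n, of "fs ! 0"] cd unfolding TT_def S_def by blast
      moreover have "set fs \<subseteq> FS n S"
      proof
        fix x assume "x \<in> set fs"
        then obtain j where j: "j < length fs" "x = fs ! j" by (auto simp: in_set_conv_nth)
        then have "bl n x = S" using allb len by simp
        moreover have "x \<in> subexc n" using ss \<open>x \<in> set fs\<close> by blast
        ultimately show "x \<in> FS n S" by (simp add: FS_def)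
      qed
      ultimately show "fs \<in> (\<Union>S\<in>TT n k. B S)" using len by (auto simp: B_def)
    qed
    show "(\<Union>S\<in>TT n k. B S) \<subseteq> L"
    proof
      fix fs assume "fs \<in> (\<Union>S\<in>TT n k. B S)"
      then obtain S where S: "S \<in> TT n k" and sf: "set fs \<subseteq> FS n S" and len: "length fs = l"
        by (auto simp: B_def)
      have bj: "\<forall>j<l. bl n (fs ! j) = S"
      proof (intro allI impI)
        fix j assume "j < l"
        then have "fs ! j \<in> set fs" using len by simp
        then have "fs ! j \<in> FS n S" using sf by blast
        then show "bl n (fs ! j) = S" by (simp add: FS_def)
      qed
      have b0: "bl n (fs ! 0) = S" using bj l by simp
      have ss: "set fs \<subseteq> subexc n" using sf by (auto simp: FS_def)
      have "card (bl n (fs ! 0)) = k + 1" using b0 S by (simp add: TT_def)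
      then show "fs \<in> L" unfolding L_def using len ss bj b0 by simp
    qed
  qed
  have fT: "finite (TT n k)"
    by (rule finite_subset[of _ "Pow {1..n}"]) (auto simp: TT_def)
  have fB: "\<forall>S\<in>TT n k. finite (B S)"
    using finite_lists_length_eq[OF finite_FS] by (simp add: B_def)
  have dj: "\<forall>S\<in>TT n k. \<forall>S'\<in>TT n k. S \<noteq> S' \<longrightarrow> B S \<inter> B S' = {}"
  proof (intro ballI impI)
    fix S S' :: "nat set" assume "S \<noteq> S'"
    show "B S \<inter> B S' = {}"
    proof (rule ccontr)
      assume "B S \<inter> B S' \<noteq> {}"
      then obtain fs where "set fs \<subseteq> FS n S" "set fs \<subseteq> FS n S'" "length fs = l" by (auto simp: B_def)
      moreover have "fs ! 0 \<in> set fs" using \<open>length fs = l\<close> l by (simp add: nth_mem)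
      ultimately have "fs ! 0 \<in> FS n S" "fs ! 0 \<in> FS n S'" by blast+
      then have "bl n (fs ! 0) = S" "bl n (fs ! 0) = S'" by (simp_all add: FS_def)
      then show False using \<open>S \<noteq> S'\<close> by simp
    qed
  qed
  have "A l n k = card L" unfolding A_def L_def ..
  also have "\<dots> = (\<Sum>S\<in>TT n k. card (B S))"
    using LB card_UN_disjoint[OF fT fB dj] by simp
  also have "\<dots> = (\<Sum>S\<in>TT n k. card (FS n S) ^ l)"
    using card_lists_length_eq[OF finite_FS] by (simp add: B_def)
  finally show ?thesis .
qed

lemma A_sym:
  assumes l: "l \<ge> 1" and n: "n \<ge> 1" and k: "k \<le> n - 1"
  shows "A l n k = A l n (n - 1 - k)"
proof -
  have "(\<Sum>S\<in>TT n k. card (FS n S) ^ l) = (\<Sum>S\<in>TT n (n - 1 - k). card (FS n S) ^ l)"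
  proof (rule sum.reindex_bij_witness[where i="phi n" and j="phi n"])
    fix S assume "S \<in> TT n (n - 1 - k)"
    then show "phi n (phi n S) = S" using phi_phi by (auto simp: TT_def)
  next
    fix S assume S: "S \<in> TT n (n - 1 - k)"
    then have "card (phi n S) = k + 1" using card_phi[of S n] k n by (auto simp: TT_def)
    then show "phi n S \<in> TT n k" using phi_sub[OF n] phi_one by (auto simp: TT_def)
  next
    fix S assume "S \<in> TT n k"
    then show "phi n (phi n S) = S" using phi_phi by (auto simp: TT_def)
  next
    fix S assume S: "S \<in> TT n k"
    then have "card (phi n S) = n - 1 - k + 1" using card_phi[of S n] k n by (auto simp: TT_def)
    then show "phi n S \<in> TT n (n - 1 - k)" using phi_sub[OF n] phi_one by (auto simp: TT_def)
  next
    fix S assume "S \<in> TT n k"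
    then show "card (FS n (phi n S)) ^ l = card (FS n S) ^ l"
      using c_phi[OF n, of S] by (auto simp: TT_def)
  qed
  then show ?thesis using A_sum[OF l n] by simp
qed

theorem mainTheorem14:
  fixes l n :: nat
  assumes "l \<ge> 1" and "n \<ge> 1"
  shows "(\<forall>s t :: 'a::comm_semiring_1. Apoly l n s t = Apoly l n t s)
       \<and> (\<forall>k\<le>n-1. A l n k = A l n (n - 1 - k))"
proof
  show cs: "\<forall>k\<le>n-1. A l n k = A l n (n - 1 - k)" using A_sym[OF assms] by blast
  show "\<forall>s t :: 'a. Apoly l n s t = Apoly l n t s"
  proof (intro allI)
    fix s t :: 'a
    have "Apoly l n t s = (\<Sum>k=0..n-1. of_nat (A l n (n - 1 + 0 - k)) * t ^ (n - 1 + 0 - k) * s ^ (n - 1 - (n - 1 + 0 - k)))"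
      unfolding Apoly_def by (rule sum.atLeastAtMost_rev)
    also have "\<dots> = (\<Sum>k=0..n-1. of_nat (A l n k) * s ^ k * t ^ (n - 1 - k))"
    proof (rule sum.cong)
      fix k assume "k \<in> {0..n-1}"
      then have kk: "k \<le> n - 1" by simp
      then have "n - 1 - (n - 1 + 0 - k) = k" by simp
      moreover have "A l n (n - 1 + 0 - k) = A l n k" using cs kk by simp
      ultimately show "of_nat (A l n (n - 1 + 0 - k)) * t ^ (n - 1 + 0 - k) * s ^ (n - 1 - (n - 1 + 0 - k))
          = of_nat (A l n k) * s ^ k * t ^ (n - 1 - k)"
        by (simp add: ac_simps)
    qed simp
    finally show "Apoly l n s t = Apoly l n t s" unfolding Apoly_def by simp
  qed
qed

end
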